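(* Assume $c_\star>1+\log4$. There is an event $\Omega'\subset\Omega$ with $\mathbb P(\Omega')=1$ such that on $\Omega'$, for all but a finite number of indices $n$, for all $A\subseteq\mathcal V_n^\circ$, $$P_{\pi_n^\circ}\big(T^\circ(A\cap I_n^\star)>t\big)\ge(1+o(1))\exp\big(-2t|A\cap I_n^\star|/|\mathcal V_n^\circ|\big)-\mathcal O\big(\tfrac1{\log n}\big),\qquad t>0.$$
   Context: Let $\mathcal V_n=\{-1,1\}^n$, $\mathcal E_n$ the nearest-neighbour edges. Let $(g(x))_{x\in\mathcal V_n}$, $n\ge1$, be i.i.d. standard Gaussians on $(\Omega,\mathcal F,\mathbb P)$. Given $c_\star>0$, $u_n$ satisfies $\mathbb P(g(x)\le-u_n)=n^{-c_\star}$; $H_n(x)=\sqrt ng(x)$ if $g(x)\le-u_n$, else $0$; $\beta>0$. Call $x$ occupied if $g(x)\le-u_n$; $I_n^\star$ = occupied vertices without occupied neighbours; $\mathcal V_n^\star$ = occupied vertices not in $I_n^\star$; $\mathcal V_n^\circ=\mathcal V_n\setminus\mathcal V_n^\star$. $J_n$ is the Markov chain with $p_n(x,y)=e^{-\beta[H_n(y)-H_n(x)]^+}/\sum_{y':(x,y')\in\mathcal E_n}e^{-\beta[H_n(y')-H_n(x)]^+}$ on edges, $0$ otherwise; $J_n^\circ$ is $J_n$ observed at its successive visits to $\mathcal V_n^\circ$; $\pi_n^\circ$ is the invariant measure of $J_n^\circ$ (the uniform distribution on $\mathcal V_n^\circ$), $P_{\pi_n^\circ}$ the law of $J_n^\circ$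 started from $\pi_n^\circ$ given the environment; $T^\circ(B)=\inf\{i\in\mathbb N:J_n^\circ(i)\in B\}$. *)

theory Defs
  imports "HOL-Probability.Probability"
begin

(* Vertices of the hypercube {-1,1}^n are encoded as boolean lists of length n.
   The vertex sets for different n are disjoint, so a single family
   g :: bool list => 'w => real indexes the Gaussians of all levels n.
   An environment realisation is G = (\<lambda>x. g x \<omega>). *)

definition hyp :: "nat \<Rightarrow> bool list set" where
  "hyp n = {x. length x = n}"

definition adj :: "bool list \<Rightarrow> bool list \<Rightarrow> bool" where
  "adj x y \<longleftrightarrow> length x = length y \<and> card {i. i < length x \<and> x ! i \<noteq> y ! i} = 1"

definition occupied :: "(nat \<Rightarrow> real) \<Rightarrow> (bool list \<Rightarrow> real) \<Rightarrow> bool list \<Rightarrow> bool" where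
  "occupied u G x \<longleftrightarrow> G x \<le> - u (length x)"

definition Hn :: "(nat \<Rightarrow> real) \<Rightarrow> (bool list \<Rightarrow> real) \<Rightarrow> bool list \<Rightarrow> real" where
  "Hn u G x = (if occupied u G x then sqrt (real (length x)) * G x else 0)"

definition trans_prob :: "real \<Rightarrow> (nat \<Rightarrow> real) \<Rightarrow> (bool list \<Rightarrow> real) \<Rightarrow> bool list \<Rightarrow> bool list \<Rightarrow> real" where
  "trans_prob \<beta> u G x y =
     (if adj x y then
        exp (- \<beta> * max 0 (Hn u G y - Hn u G x)) /
        (\<Sum>y'\<in>{y'. adj x y'}. exp (- \<beta> * max 0 (Hn u G y' - Hn u G x)))
      else 0)"

definition Istar :: "(nat \<Rightarrow> real) \<Rightarrow> (bool list \<Rightarrow> real) \<Rightarrow> nat \<Rightarrow> bool list set" where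
  "Istar u G n = {x \<in> hyp n. occupied u G x \<and> (\<forall>y. adj x y \<longrightarrow> \<not> occupied u G y)}"

definition Vstar :: "(nat \<Rightarrow> real) \<Rightarrow> (bool list \<Rightarrow> real) \<Rightarrow> nat \<Rightarrow> bool list set" where
  "Vstar u G n = {x \<in> hyp n. occupied u G x} - Istar u G n"

definition Vcirc :: "(nat \<Rightarrow> real) \<Rightarrow> (bool list \<Rightarrow> real) \<Rightarrow> nat \<Rightarrow> bool list set" where
  "Vcirc u G n = hyp n - Vstar u G n"

(* taboo probabilities: taboo k z y = P_z(J(1),...,J(k) \<in> V^star, J(k+1) = y) *)
fun taboo :: "real \<Rightarrow> (nat \<Rightarrow> real) \<Rightarrow> (bool list \<Rightarrow> real) \<Rightarrow> nat \<Rightarrow> nat \<Rightarrow> bool list \<Rightarrow> bool list \<Rightarrow> real" where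
  "taboo \<beta> u G n 0 z y = trans_prob \<beta> u G z y"
| "taboo \<beta> u G n (Suc k) z y = (\<Sum>w\<in>Vstar u G n. trans_prob \<beta> u G z w * taboo \<beta> u G n k w y)"

(* transition probabilities of the trace chain J_n^circ on V_n^circ:
   probability that J_n started at x makes its next visit to V_n^circ at y *)
definition trace_prob :: "real \<Rightarrow> (nat \<Rightarrow> real) \<Rightarrow> (bool list \<Rightarrow> real) \<Rightarrow> nat \<Rightarrow> bool list \<Rightarrow> bool list \<Rightarrow> real" where
  "trace_prob \<beta> u G n x y = (\<Sum>k. taboo \<beta> u G n k x y)"

(* avoid k B x = P_x(J^circ(0),...,J^circ(k) \<notin> B) *)
fun avoid :: "real \<Rightarrow> (nat \<Rightarrow> real) \<Rightarrow> (bool list \<Rightarrow> real) \<Rightarrow> nat \<Rightarrow> bool list set \<Rightarrow> nat \<Rightarrow> bool list \<Rightarrow> real" where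
  "avoid \<beta> u G n B 0 x = (if x \<in> B then 0 else 1)"
| "avoid \<beta> u G n B (Suc k) x =
     (if x \<in> B then 0 else (\<Sum>y\<in>Vcirc u G n. trace_prob \<beta> u G n x y * avoid \<beta> u G n B k y))"

(* P_{\<pi>^circ}(T^circ(B) > t) for real t > 0, where T^circ(B) = inf{i \<in> \<nat>. J^circ(i) \<in> B}
   (\<nat> including 0) and \<pi>^circ is uniform on V^circ:  T > t  iff  J^circ(i) \<notin> B for i = 0..\<lfloor>t\<rfloor>. *)
definition hit_tail :: "real \<Rightarrow> (nat \<Rightarrow> real) \<Rightarrow> (bool list \<Rightarrow> real) \<Rightarrow> nat \<Rightarrow> bool list set \<Rightarrow> real \<Rightarrow> real" where
  "hit_tail \<beta> u G n B t =
     (\<Sum>x\<in>Vcirc u G n. avoid \<beta> u G n B (nat \<lfloor>t\<rfloor>) x) / real (card (Vcirc u G n))"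

end

theory Submission
  imports Defs
begin

definition flip :: "bool list \<Rightarrow> nat \<Rightarrow> bool list" where
  "flip x i = x[i := \<not> x ! i]"

definition hdist :: "bool list \<Rightarrow> bool list \<Rightarrow> nat" where
  "hdist x y = card {i. i < length x \<and> x ! i \<noteq> y ! i}"

lemma diffset_flip: "i < length x \<Longrightarrow> {j. j < length x \<and> x ! j \<noteq> flip x i ! j} = {i}"
  by (auto simp: flip_def nth_list_update)

lemma adj_flip: "i < length x \<Longrightarrow> adj x (flip x i)"
  unfolding adj_def using diffset_flip[of i x] by (simp add: flip_def)

lemma adj_length: "adj x y \<Longrightarrow> length y = length x"
  by (simp add: adj_def)

lemma adj_sym: "adj x y \<longleftrightarrow> adj y x"
proof -
  have "{i. i < length x \<and> x ! i \<noteq> y ! i} = {i. i < length y \<and> y ! i \<noteq> x ! i}" if "length x = length y"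
    using that by auto
  thus ?thesis unfolding adj_def by (cases "length x = length y") simp_all
qed

lemma adj_is_flip:
  assumes "adj x y" obtains i where "i < length x" "y = flip x i"
proof -
  from assms have l: "length y = length x" and c: "card {i. i < length x \<and> x ! i \<noteq> y ! i} = 1"
    by (auto simp: adj_def)
  from c obtain i where i: "{i. i < length x \<and> x ! i \<noteq> y ! i} = {i}" by (auto simp: card_1_singleton_iff)
  hence il: "i < length x" and ne: "x ! i \<noteq> y ! i" by auto
  have "y = flip x i"
  proof (rule nth_equalityI)
    show "length y = length (flip x i)" using l by (simp add: flip_def)
    fix j assume "j < length y"
    thus "y ! j = flip x i ! j" using i ne l il by (cases "j = i") (auto simp: flip_def nth_list_update)
  qed
  thus ?thesis using il that by blast
qed

lemma adj_set: "{y. adj x y} = flip x ` {..<length x}"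
  using adj_is_flip adj_flip by blast

lemma flip_inj: "inj_on (flip x) {..<length x}"
proof (rule inj_onI)
  fix i j assume "i \<in> {..<length x}" "j \<in> {..<length x}" "flip x i = flip x j"
  thus "i = j" unfolding flip_def by (metis lessThan_iff nth_list_update_eq nth_list_update_neq)
qed

lemma card_adj: "card {y. adj x y} = length x"
  by (simp add: adj_set card_image flip_inj)

lemma finite_adj: "finite {y. adj x y}"
  by (simp add: adj_set)

lemma finite_hyp: "finite (hyp n)"
proof -
  have "hyp n = {xs. set xs \<subseteq> UNIV \<and> length xs = n}" by (auto simp: hyp_def)
  thus ?thesis using finite_lists_length_eq[of "UNIV::bool set" n] by simp
qed

lemma card_hyp: "card (hyp n) = 2 ^ n"
proof -
  have "hyp n = {xs. set xs \<subseteq> UNIV \<and> length xs = n}" by (auto simp: hyp_def)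
  thus ?thesis using card_lists_length_eq[of "UNIV::bool set" n] by simp
qed

lemma adj_hyp: "x \<in> hyp n \<Longrightarrow> adj x y \<Longrightarrow> y \<in> hyp n"
  by (simp add: hyp_def adj_length)

lemma flip_hyp: "x \<in> hyp n \<Longrightarrow> flip x i \<in> hyp n"
  by (simp add: hyp_def flip_def)

lemma hdist_le: "hdist x y \<le> length x"
proof -
  have "{i. i < length x \<and> x ! i \<noteq> y ! i} \<subseteq> {..<length x}" by auto
  thus ?thesis unfolding hdist_def by (metis card_lessThan card_mono finite_lessThan)
qed

lemma hdist_zero: "length x = length y \<Longrightarrow> hdist x y = 0 \<Longrightarrow> x = y"
  unfolding hdist_def by (auto intro: nth_equalityI)

lemma hdist_step:
  assumes "hdist x y = Suc L" "length x = length y"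
  obtains i where "i < length x" "hdist (flip x i) y = L"
proof -
  let ?D = "{i. i < length x \<and> x ! i \<noteq> y ! i}"
  have fin: "finite ?D" by simp
  from assms have "?D \<noteq> {}" unfolding hdist_def by (metis card.empty nat.distinct(1))
  then obtain i where i: "i \<in> ?D" by blast
  have "{j. j < length (flip x i) \<and> flip x i ! j \<noteq> y ! j} = ?D - {i}"
    using i by (auto simp: flip_def nth_list_update)
  hence "hdist (flip x i) y = L" using assms i fin unfolding hdist_def by simp
  thus ?thesis using i that by blast
qed



locale env =
  fixes \<beta> :: real and u :: "nat \<Rightarrow> real" and G :: "bool list \<Rightarrow> real" and n :: nat
  assumes npos: "n \<ge> 1" and unn: "u n \<ge> 0"
begin

abbreviation "p \<equiv> trans_prob \<beta> u G"
abbreviation "H \<equiv> Hn u G"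
abbreviation "V \<equiv> Vcirc u G n"
abbreviation "S \<equiv> Vstar u G n"
abbreviation "I \<equiv> Istar u G n"
abbreviation "tb \<equiv> taboo \<beta> u G n"
abbreviation "tr \<equiv> trace_prob \<beta> u G n"

definition Z :: "bool list \<Rightarrow> real" where
  "Z x = (\<Sum>y'\<in>{y'. adj x y'}. exp (- \<beta> * max 0 (H y' - H x)))"

definition mu :: "bool list \<Rightarrow> real" where
  "mu x = Z x * exp (- \<beta> * H x)"

lemma p_def': "p x y = (if adj x y then exp (- \<beta> * max 0 (H y - H x)) / Z x else 0)"
  unfolding trans_prob_def Z_def by simp

lemma Z_pos: "adj x y \<Longrightarrow> Z x > 0"
  unfolding Z_def by (rule sum_pos) (auto simp: finite_adj)

lemma p_nonneg: "p x y \<ge> 0"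
proof (cases "adj x y")
  case True thus ?thesis using Z_pos[OF True] by (simp add: p_def')
qed (simp add: p_def')

lemma H_le: "x \<in> hyp n \<Longrightarrow> H x \<le> 0"
  using unn by (auto simp: Hn_def occupied_def hyp_def intro!: mult_nonneg_nonpos)

lemma db: "p x y * mu x = p y x * mu y"
proof (cases "adj x y")
  case True
  hence a2: "adj y x" using adj_sym by blast
  have e: "exp (- (\<beta> * max 0 (H y - H x))) * exp (- (\<beta> * H x)) = exp (- (\<beta> * max (H x) (H y)))" for x y
    by (simp add: exp_add[symmetric] max_def algebra_simps)
  have "p x y * mu x = exp (- \<beta> * max (H x) (H y))"
    using True Z_pos[OF True] by (simp add: p_def' mu_def e)
  moreover have "p y x * mu y = exp (- \<beta> * max (H y) (H x))"
    using a2 Z_pos[OF a2] by (simp add: p_def' mu_def e)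
  ultimately show ?thesis by (simp add: max.commute)
next
  case False
  hence "\<not> adj y x" using adj_sym by blast
  thus ?thesis using False by (simp add: p_def')
qed

lemma S_sub: "S \<subseteq> hyp n" by (auto simp: Vstar_def)
lemma V_sub: "V \<subseteq> hyp n" by (auto simp: Vcirc_def)
lemma VS_disj: "V \<inter> S = {}" by (auto simp: Vcirc_def)
lemma VS_un: "V \<union> S = hyp n" using S_sub by (auto simp: Vcirc_def)
lemma finite_S: "finite S" using S_sub finite_hyp finite_subset by blast
lemma finite_V: "finite V" using V_sub finite_hyp finite_subset by blast

lemma adj_nonempty: "x \<in> hyp n \<Longrightarrow> \<exists>y. adj x y"
  using adj_flip[of 0 x] npos by (auto simp: hyp_def)

lemma mu_V: assumes "x \<in> V" shows "mu x = real n"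
proof -
  have xh: "x \<in> hyp n" and xS: "x \<notin> S" using assms by (auto simp: Vcirc_def)
  have cardA: "card {y. adj x y} = n" using xh by (simp add: card_adj hyp_def)
  show ?thesis
  proof (cases "occupied u G x")
    case False
    hence Hx: "H x = 0" by (simp add: Hn_def)
    have "Z x = (\<Sum>y'\<in>{y'. adj x y'}. 1)"
      unfolding Z_def
    proof (rule sum.cong)
      fix y assume "y \<in> {y'. adj x y'}"
      hence "H y \<le> 0" using H_le adj_hyp xh by blast
      thus "exp (- \<beta> * max 0 (H y - H x)) = 1" using Hx by simp
    qed simp
    thus ?thesis using cardA by (simp add: mu_def Hx)
  next
    case True
    hence xI: "x \<in> I" using xS xh by (auto simp: Vstar_def)
    hence nb: "\<And>y. adj x y \<Longrightarrow> H y = 0" by (auto simp: Istar_def Hn_def)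
    have Hx: "H x \<le> 0" using H_le xh by blast
    have "Z x = (\<Sum>y'\<in>{y'. adj x y'}. exp (\<beta> * H x))"
      unfolding Z_def
    proof (rule sum.cong)
      fix y assume "y \<in> {y'. adj x y'}"
      hence "H y = 0" using nb by blast
      thus "exp (- \<beta> * max 0 (H y - H x)) = exp (\<beta> * H x)" using Hx by simp
    qed simp
    hence "Z x = real n * exp (\<beta> * H x)" using cardA by simp
    thus ?thesis by (simp add: mu_def mult.assoc exp_add[symmetric])
  qed
qed

lemma p_out: "x \<in> hyp n \<Longrightarrow> y \<notin> hyp n \<Longrightarrow> p x y = 0"
  using adj_hyp by (auto simp: p_def')

lemma p_row: assumes "x \<in> hyp n" shows "(\<Sum>y\<in>hyp n. p x y) = 1"
proof -
  obtain y0 where y0: "adj x y0" using adj_nonempty assms by blast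
  have sub: "{y. adj x y} \<subseteq> hyp n" using adj_hyp assms by blast
  have "(\<Sum>y\<in>hyp n. p x y) = (\<Sum>y\<in>{y. adj x y}. p x y)"
    by (rule sum.mono_neutral_right[OF finite_hyp sub]) (auto simp: p_def')
  also have "\<dots> = (\<Sum>y\<in>{y. adj x y}. exp (- \<beta> * max 0 (H y - H x)) / Z x)"
    by (rule sum.cong) (auto simp: p_def')
  also have "\<dots> = Z x / Z x" by (simp add: Z_def sum_divide_distrib[symmetric])
  also have "\<dots> = 1" using Z_pos[OF y0] by simp
  finally show ?thesis .
qed

lemma p_le1: assumes "x \<in> hyp n" shows "p x y \<le> 1"
proof (cases "y \<in> hyp n")
  case True
  have "p x y \<le> (\<Sum>y\<in>hyp n. p x y)"
    by (rule member_le_sum[OF True]) (auto simp: p_nonneg finite_hyp)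
  thus ?thesis using p_row[OF assms] by simp
qed (simp add: p_out assms)

lemma tb_nonneg: "tb k z y \<ge> 0"
  by (induction k arbitrary: z) (auto intro!: sum_nonneg mult_nonneg_nonneg p_nonneg)

lemma tb_right: "tb (Suc k) z y = (\<Sum>w\<in>S. tb k z w * p w y)"
proof (induction k arbitrary: z)
  case 0 thus ?case by simp
next
  case (Suc k)
  have "tb (Suc (Suc k)) z y = (\<Sum>w\<in>S. p z w * (\<Sum>w'\<in>S. tb k w w' * p w' y))"
    using Suc by simp
  also have "\<dots> = (\<Sum>w\<in>S. \<Sum>w'\<in>S. p z w * tb k w w' * p w' y)"
    by (simp add: sum_distrib_left mult.assoc)
  also have "\<dots> = (\<Sum>w'\<in>S. \<Sum>w\<in>S. p z w * tb k w w' * p w' y)"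
    by (rule sum.swap)
  also have "\<dots> = (\<Sum>w'\<in>S. tb (Suc k) z w' * p w' y)"
    by (simp add: sum_distrib_right)
  finally show ?case .
qed

lemma tb_rev: "mu z * tb k z y = mu y * tb k y z"
proof (induction k arbitrary: z y)
  case 0 thus ?case using db[of z y] by (simp add: mult.commute)
next
  case (Suc k)
  have "mu z * tb (Suc k) z y = (\<Sum>w\<in>S. (p z w * mu z) * tb k w y)"
    by (simp add: sum_distrib_left mult_ac)
  also have "\<dots> = (\<Sum>w\<in>S. p w z * (mu w * tb k w y))"
    by (rule sum.cong[OF refl]) (metis db mult.assoc)
  also have "\<dots> = (\<Sum>w\<in>S. p w z * (mu y * tb k y w))"
    using Suc by simp
  also have "\<dots> = mu y * (\<Sum>w\<in>S. tb k y w * p w z)"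
    by (simp add: sum_distrib_left mult_ac)
  also have "\<dots> = mu y * tb (Suc k) y z"
    by (simp only: tb_right)
  finally show ?case .
qed

lemma tb_sym: "z \<in> V \<Longrightarrow> y \<in> V \<Longrightarrow> tb k z y = tb k y z"
  using tb_rev[of z k y] mu_V npos by simp

lemma tr_sym: "z \<in> V \<Longrightarrow> y \<in> V \<Longrightarrow> tr z y = tr y z"
  unfolding trace_prob_def using tb_sym by simp

end


context env begin

definition T :: "nat \<Rightarrow> bool list \<Rightarrow> real" where
  "T k z = (\<Sum>y\<in>hyp n. tb k z y)"

lemma T0: "z \<in> hyp n \<Longrightarrow> T 0 z = 1"
  by (simp add: T_def p_row)

lemma T_Suc_right: "T (Suc k) z = (\<Sum>w\<in>S. tb k z w)"
proof -
  have "T (Suc k) z = (\<Sum>y\<in>hyp n. \<Sum>w\<in>S. tb k z w * p w y)"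
    unfolding T_def by (rule sum.cong[OF refl]) (rule tb_right)
  also have "\<dots> = (\<Sum>w\<in>S. \<Sum>y\<in>hyp n. tb k z w * p w y)" by (rule sum.swap)
  also have "\<dots> = (\<Sum>w\<in>S. tb k z w * (\<Sum>y\<in>hyp n. p w y))" by (simp add: sum_distrib_left)
  also have "\<dots> = (\<Sum>w\<in>S. tb k z w)"
    by (rule sum.cong[OF refl]) (use S_sub p_row in auto)
  finally show ?thesis .
qed

lemma T_Suc_left: "T (Suc k) z = (\<Sum>w\<in>S. p z w * T k w)"
proof -
  have "T (Suc k) z = (\<Sum>y\<in>hyp n. \<Sum>w\<in>S. p z w * tb k w y)"
    unfolding T_def by simp
  also have "\<dots> = (\<Sum>w\<in>S. \<Sum>y\<in>hyp n. p z w * tb k w y)" by (rule sum.swap)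
  also have "\<dots> = (\<Sum>w\<in>S. p z w * T k w)" by (simp add: sum_distrib_left T_def)
  finally show ?thesis .
qed

lemma T_split: "T k z = (\<Sum>y\<in>V. tb k z y) + T (Suc k) z"
proof -
  have "T k z = (\<Sum>y\<in>V \<union> S. tb k z y)" by (simp add: T_def VS_un)
  also have "\<dots> = (\<Sum>y\<in>V. tb k z y) + (\<Sum>y\<in>S. tb k z y)"
    by (rule sum.union_disjoint) (use finite_V finite_S VS_disj in auto)
  finally show ?thesis by (simp add: T_Suc_right)
qed

lemma T_nonneg: "T k z \<ge> 0"
  unfolding T_def by (rule sum_nonneg) (simp add: tb_nonneg)

lemma T_mono: "T (Suc k) z \<le> T k z"
  using T_split[of k z] sum_nonneg[of V "\<lambda>y. tb k z y"] tb_nonneg by force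

lemma T_antimono: "k \<le> k' \<Longrightarrow> T k' z \<le> T k z"
  by (rule lift_Suc_antimono_le[of "\<lambda>k. T k z"]) (auto simp: T_mono)

lemma T_partial: "(\<Sum>j<K. \<Sum>y\<in>V. tb j z y) = T 0 z - T K z"
proof (induction K)
  case 0 thus ?case by simp
next
  case (Suc K) thus ?case using T_split[of K z] by simp
qed

definition q :: real where
  "q = Min ((\<lambda>(a,b). p a b) ` (SIGMA a:hyp n. {b. adj a b}))"

lemma finite_Sig: "finite (SIGMA a:hyp n. {b. adj a b})"
  by (rule finite_SigmaI) (auto simp: finite_hyp finite_adj)

lemma q_le: "a \<in> hyp n \<Longrightarrow> adj a b \<Longrightarrow> q \<le> p a b"
  unfolding q_def by (rule Min_le) (use finite_Sig in auto)

lemma p_pos: "adj a b \<Longrightarrow> p a b > 0"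
  using Z_pos[of a b] by (simp add: p_def')

lemma hyp_ne: "replicate n True \<in> hyp n"
  by (simp add: hyp_def)

lemma q_pos: "q > 0"
proof -
  obtain b where b: "adj (replicate n True) b" using adj_nonempty hyp_ne by blast
  have ne: "(SIGMA a:hyp n. {b. adj a b}) \<noteq> {}" using b hyp_ne by blast
  show ?thesis unfolding q_def
    by (subst Min_gr_iff) (use finite_Sig ne p_pos in auto)
qed

lemma q_le1: "q \<le> 1"
proof -
  obtain b where b: "adj (replicate n True) b" using adj_nonempty hyp_ne by blast
  thus ?thesis using q_le[OF hyp_ne b] p_le1[OF hyp_ne, of b] by linarith
qed

definition U :: "nat \<Rightarrow> bool list \<Rightarrow> real" where
  "U k z = (if z \<in> S then T k z else 0)"

lemma sum_U: "(\<Sum>w\<in>S. p z w * T k w) = (\<Sum>w\<in>hyp n. p z w * U k w)"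
proof -
  have "(\<Sum>w\<in>hyp n. p z w * U k w) = (\<Sum>w\<in>S. p z w * U k w)"
    by (rule sum.mono_neutral_right[OF finite_hyp S_sub]) (auto simp: U_def)
  also have "\<dots> = (\<Sum>w\<in>S. p z w * T k w)" by (rule sum.cong) (auto simp: U_def)
  finally show ?thesis by simp
qed

lemma esc:
  assumes s: "\<forall>w\<in>hyp n. T K w \<le> s" and v: "v \<in> V"
  shows "z \<in> hyp n \<Longrightarrow> hdist z v = L \<Longrightarrow> K + L \<le> K' \<Longrightarrow> U K' z \<le> s * (1 - q ^ L)"
proof (induction L arbitrary: z K')
  have s0: "s \<ge> 0" using s V_sub v T_nonneg[of K v] by force
  have qL: "\<And>L. q ^ L \<le> 1" using q_pos q_le1 by (simp add: power_le_one)
  {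
  case 0
  hence "z = v" using v V_sub by (intro hdist_zero) (auto simp: hyp_def)
  thus ?case using v VS_disj by (auto simp: U_def)
  next
  case (Suc L)
  show ?case
  proof (cases "z \<in> S")
    case False
    thus ?thesis using s0 qL[of "Suc L"] by (simp add: U_def)
  next
    case True
    have lz: "length z = length v" using Suc.prems v V_sub by (auto simp: hyp_def)
    obtain i where i: "i < length z" "hdist (flip z i) v = L" using hdist_step[OF Suc.prems(2) lz] by blast
    define z' where "z' = flip z i"
    have z'h: "z' \<in> hyp n" unfolding z'_def by (rule flip_hyp) (rule Suc.prems(1))
    have azz: "adj z z'" unfolding z'_def by (rule adj_flip) (rule i(1))
    obtain K'' where K'': "K' = Suc K''" "K + L \<le> K''" using Suc.prems(3)
      by (cases K') auto
    have hz': "hdist z' v = L" unfolding z'_def by (rule i(2))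
    have IH: "U K'' z' \<le> s * (1 - q ^ L)" by (rule Suc.IH[OF z'h hz' K''(2)])
    define f where "f w = s - (if w = z' then s * q ^ L else 0)" for w
    have Ule: "U K'' w \<le> f w" if "w \<in> hyp n" for w
    proof (cases "w = z'")
      case True thus ?thesis using IH by (simp add: f_def algebra_simps)
    next
      case False
      have "U K'' w \<le> s"
        using T_antimono[of K K'' w] K'' s that s0 by (auto simp: U_def)
      thus ?thesis using False by (simp add: f_def)
    qed
    have "U K' z = (\<Sum>w\<in>hyp n. p z w * U K'' w)"
      using True K'' by (simp add: U_def T_Suc_left sum_U)
    also have "\<dots> \<le> (\<Sum>w\<in>hyp n. p z w * f w)"
      by (rule sum_mono) (use Ule p_nonneg in \<open>auto intro: mult_left_mono\<close>)
    also have "\<dots> = (\<Sum>w\<in>hyp n. p z w * s) - (\<Sum>w\<in>hyp n. p z w * (if w = z' then s * q ^ L else 0))"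
      by (simp add: f_def right_diff_distrib sum_subtractf)
    also have "\<dots> = s - p z z' * (s * q ^ L)"
    proof -
      have "(\<Sum>w\<in>hyp n. p z w * (if w = z' then s * q ^ L else 0)) = p z z' * (s * q ^ L)"
        using z'h finite_hyp by (simp add: if_distrib[of "\<lambda>x. p z w * x" for w] cong: if_cong)
      moreover have "(\<Sum>w\<in>hyp n. p z w * s) = s" using p_row[OF Suc.prems(1)] by (simp add: sum_distrib_right[symmetric])
      ultimately show ?thesis by simp
    qed
    also have "\<dots> \<le> s - q * (s * q ^ L)"
      using q_le[OF Suc.prems(1) azz] s0 q_pos by (intro diff_left_mono mult_right_mono) auto
    also have "\<dots> = s * (1 - q ^ Suc L)" by (simp add: algebra_simps)
    finally show ?thesis .
  qed
  }
qed

end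


context env begin

lemma decay_step:
  assumes s: "\<forall>w\<in>hyp n. T K w \<le> s" and v: "v \<in> V" and z: "z \<in> hyp n"
  shows "T (Suc (K + n)) z \<le> s * (1 - q ^ n)"
proof -
  have Ub: "U (K + n) w \<le> s * (1 - q ^ n)" if w: "w \<in> hyp n" for w
  proof -
    have hl: "hdist w v \<le> n" using hdist_le[of w v] w by (simp add: hyp_def)
    have "U (K + n) w \<le> s * (1 - q ^ hdist w v)"
      using esc[OF s v w refl] hl by simp
    also have "\<dots> \<le> s * (1 - q ^ n)"
    proof -
      have s0: "s \<ge> 0" using s V_sub v T_nonneg[of K v] by force
      have "q ^ n \<le> q ^ hdist w v" using q_pos q_le1 hl by (intro power_decreasing) auto
      thus ?thesis using s0 by (intro mult_left_mono) auto
    qed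
    finally show ?thesis .
  qed
  have "T (Suc (K + n)) z = (\<Sum>w\<in>hyp n. p z w * U (K + n) w)"
    by (simp add: T_Suc_left sum_U)
  also have "\<dots> \<le> (\<Sum>w\<in>hyp n. p z w * (s * (1 - q ^ n)))"
    by (rule sum_mono) (use Ub p_nonneg in \<open>auto intro: mult_left_mono\<close>)
  also have "\<dots> = s * (1 - q ^ n)" using p_row[OF z] by (simp add: sum_distrib_right[symmetric])
  finally show ?thesis .
qed

lemma decay:
  assumes v: "v \<in> V"
  shows "\<forall>z\<in>hyp n. T (j * Suc n) z \<le> (1 - q ^ n) ^ j"
proof (induction j)
  case 0 thus ?case by (simp add: T0)
next
  case (Suc j)
  have e: "Suc j * Suc n = Suc (j * Suc n + n)" by simp
  have "T (Suc (j * Suc n + n)) z \<le> (1 - q ^ n) ^ j * (1 - q ^ n)" if "z \<in> hyp n" for z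
    using decay_step[OF Suc.IH v that] .
  thus ?case unfolding e by (simp add: mult.commute)
qed

lemma T_lim:
  assumes v: "v \<in> V" and z: "z \<in> hyp n"
  shows "(\<lambda>k. T k z) \<longlonglongrightarrow> 0"
proof (rule LIMSEQ_I)
  fix r :: real assume r: "r > 0"
  let ?a = "1 - q ^ n"
  have qn: "0 < q ^ n" "q ^ n \<le> 1" using q_pos q_le1 by (auto simp: power_le_one)
  have "\<bar>?a\<bar> < 1" using qn by auto
  from Archimedean_eventually_pow_inverse[OF this r] obtain j where j: "\<bar>?a ^ j\<bar> < r"
    by (auto simp: eventually_sequentially)
  have "\<forall>k\<ge>j * Suc n. norm (T k z - 0) < r"
  proof (intro allI impI)
    fix k assume k: "k \<ge> j * Suc n"
    have "T k z \<le> T (j * Suc n) z" by (rule T_antimono[OF k])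
    also have "\<dots> \<le> ?a ^ j" using decay[OF v] z by blast
    also have "\<dots> < r" using j by linarith
    finally show "norm (T k z - 0) < r" using T_nonneg[of k z] by simp
  qed
  thus "\<exists>no. \<forall>k\<ge>no. norm (T k z - 0) < r" by blast
qed

lemma tb_summable:
  assumes x: "x \<in> hyp n" and y: "y \<in> V"
  shows "summable (\<lambda>k. tb k x y)"
proof (rule summableI_nonneg_bounded)
  show "0 \<le> tb k x y" for k by (rule tb_nonneg)
  fix K
  have "(\<Sum>k<K. tb k x y) \<le> (\<Sum>k<K. \<Sum>y'\<in>V. tb k x y')"
    by (rule sum_mono, rule member_le_sum) (use y finite_V tb_nonneg in auto)
  also have "\<dots> = T 0 x - T K x" by (rule T_partial)
  also have "\<dots> \<le> 1" using T0[OF x] T_nonneg[of K x] by simp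
  finally show "(\<Sum>k<K. tb k x y) \<le> 1" .
qed

lemma tr_nonneg: "x \<in> hyp n \<Longrightarrow> y \<in> V \<Longrightarrow> tr x y \<ge> 0"
  unfolding trace_prob_def by (rule suminf_nonneg[OF tb_summable]) (auto simp: tb_nonneg)

lemma tr_row:
  assumes x: "x \<in> hyp n" and v: "v \<in> V"
  shows "(\<Sum>y\<in>V. tr x y) = 1"
proof -
  have "(\<lambda>k. \<Sum>y\<in>V. tb k x y) sums 1"
    unfolding sums_def
  proof -
    have "(\<lambda>K. 1 - T K x) \<longlonglongrightarrow> 1 - 0" by (intro tendsto_diff tendsto_const T_lim[OF v x])
    moreover have "(\<Sum>k<K. \<Sum>y\<in>V. tb k x y) = 1 - T K x" for K using T_partial T0[OF x] by simp
    ultimately show "(\<lambda>K. \<Sum>k<K. \<Sum>y\<in>V. tb k x y) \<longlonglongrightarrow> 1" by simp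
  qed
  hence "(\<Sum>k. \<Sum>y\<in>V. tb k x y) = 1" by (rule sums_unique[symmetric])
  moreover have "(\<Sum>k. \<Sum>y\<in>V. tb k x y) = (\<Sum>y\<in>V. tr x y)"
    unfolding trace_prob_def by (rule suminf_sum) (rule tb_summable[OF x])
  ultimately show ?thesis by simp
qed

end


lemma logconv:
  fixes c :: "nat \<Rightarrow> real"
  assumes c0: "\<And>m. c m \<ge> 0" and cs: "\<And>m. c (Suc m) ^ 2 \<le> c m * c (Suc (Suc m))"
    and r0: "\<rho> \<ge> 0" and c1: "c 1 \<ge> \<rho> * c 0"
  shows "c m \<ge> \<rho> ^ m * c 0"
proof -
  have st: "c (Suc m) \<ge> \<rho> * c m" for m
  proof (induction m)
    case 0 thus ?case using c1 by simp
  next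
    case (Suc m)
    show ?case
    proof (cases "c m = 0")
      case True
      hence "c (Suc m) ^ 2 \<le> 0" using cs[of m] by simp
      hence "c (Suc m) = 0" by simp
      thus ?thesis using c0 by simp
    next
      case False
      hence cp: "c m > 0" using c0[of m] by simp
      have "c m * (\<rho> * c (Suc m)) = (\<rho> * c m) * c (Suc m)" by simp
      also have "\<dots> \<le> c (Suc m) * c (Suc m)" using Suc c0 by (intro mult_right_mono) auto
      also have "\<dots> \<le> c m * c (Suc (Suc m))" using cs[of m] by (simp add: power2_eq_square)
      finally show ?thesis using cp by simp
    qed
  qed
  show ?thesis
  proof (induction m)
    case 0 thus ?case by simp
  next
    case (Suc m)
    have "\<rho> ^ Suc m * c 0 = \<rho> * (\<rho> ^ m * c 0)" by simp
    also have "\<dots> \<le> \<rho> * c m" using Suc r0 by (intro mult_left_mono) auto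
    also have "\<dots> \<le> c (Suc m)" by (rule st)
    finally show ?case .
  qed
qed

locale env2 = env +
  fixes B :: "bool list set" and v :: "bool list"
  assumes BV: "B \<subseteq> V" and vV: "v \<in> V"
begin

abbreviation "av \<equiv> avoid \<beta> u G n B"
abbreviation "D0 \<equiv> V - B"

lemma finite_D0: "finite D0" using finite_V by simp
lemma finite_B: "finite B" using finite_V BV finite_subset by blast

lemma av_B: "x \<in> B \<Longrightarrow> av k x = 0"
  by (cases k) auto

lemma av0: "x \<in> D0 \<Longrightarrow> av 0 x = 1" by simp

lemma av_Suc: assumes "x \<in> D0" shows "av (Suc k) x = (\<Sum>y\<in>D0. tr x y * av k y)"
proof -
  have "av (Suc k) x = (\<Sum>y\<in>V. tr x y * av k y)" using assms by simp
  also have "\<dots> = (\<Sum>y\<in>D0. tr x y * av k y)"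
    by (rule sum.mono_neutral_right) (auto simp: finite_V av_B)
  finally show ?thesis .
qed

lemma av_bounds: "x \<in> V \<Longrightarrow> 0 \<le> av k x \<and> av k x \<le> 1"
proof (induction k arbitrary: x)
  case 0 thus ?case by simp
next
  case (Suc k)
  show ?case
  proof (cases "x \<in> B")
    case True thus ?thesis by simp
  next
    case False
    have xh: "x \<in> hyp n" using Suc.prems V_sub by blast
    have "0 \<le> (\<Sum>y\<in>V. tr x y * av k y)"
      by (rule sum_nonneg) (use Suc.IH tr_nonneg[OF xh] in auto)
    moreover have "(\<Sum>y\<in>V. tr x y * av k y) \<le> (\<Sum>y\<in>V. tr x y)"
      by (rule sum_mono) (use Suc.IH tr_nonneg[OF xh] in \<open>auto intro: mult_left_le\<close>)
    ultimately show ?thesis using False tr_row[OF xh vV] by simp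
  qed
qed

lemma av_mono: "x \<in> V \<Longrightarrow> av (Suc k) x \<le> av k x"
proof (induction k arbitrary: x)
  case 0 thus ?case using av_bounds[OF 0, of 1] by (cases "x \<in> B") auto
next
  case (Suc k)
  show ?case
  proof (cases "x \<in> B")
    case True thus ?thesis by simp
  next
    case False
    have xh: "x \<in> hyp n" using Suc.prems V_sub by blast
    have "(\<Sum>y\<in>V. tr x y * av (Suc k) y) \<le> (\<Sum>y\<in>V. tr x y * av k y)"
    proof (rule sum_mono)
      fix y assume y: "y \<in> V"
      from Suc.IH[OF y] tr_nonneg[OF xh y] show "tr x y * av (Suc k) y \<le> tr x y * av k y"
        by (rule mult_left_mono)
    qed
    thus ?thesis using False by simp
  qed
qed

lemma av_antimono: assumes "x \<in> V" "k \<le> k'" shows "av k' x \<le> av k x"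
proof -
  have m: "\<And>j. av (Suc j) x \<le> av j x" using av_mono[OF assms(1)] .
  show ?thesis using lift_Suc_antimono_le[of "\<lambda>j. av j x", OF m assms(2)] .
qed

declare avoid.simps[simp del]

definition ip :: "(bool list \<Rightarrow> real) \<Rightarrow> (bool list \<Rightarrow> real) \<Rightarrow> real" where
  "ip f g = (\<Sum>x\<in>D0. f x * g x)"

lemma selfadj:
  "ip (\<lambda>x. \<Sum>y\<in>D0. tr x y * f y) g = ip f (\<lambda>x. \<Sum>y\<in>D0. tr x y * g y)"
proof -
  have "ip (\<lambda>x. \<Sum>y\<in>D0. tr x y * f y) g = (\<Sum>x\<in>D0. \<Sum>y\<in>D0. tr x y * f y * g x)"
    by (simp add: ip_def sum_distrib_right)
  also have "\<dots> = (\<Sum>y\<in>D0. \<Sum>x\<in>D0. tr x y * f y * g x)" by (rule sum.swap)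
  also have "\<dots> = (\<Sum>y\<in>D0. \<Sum>x\<in>D0. f y * (tr y x * g x))"
    by (intro sum.cong refl) (use tr_sym in auto)
  also have "\<dots> = ip f (\<lambda>x. \<Sum>y\<in>D0. tr x y * g y)"
    by (simp add: ip_def sum_distrib_left)
  finally show ?thesis .
qed

lemma ip_cong: "(\<And>x. x \<in> D0 \<Longrightarrow> f x = f' x) \<Longrightarrow> (\<And>x. x \<in> D0 \<Longrightarrow> g x = g' x) \<Longrightarrow> ip f g = ip f' g'"
  unfolding ip_def by (rule sum.cong) auto

lemma ip_shift: "ip (av i) (av j) = ip (av 0) (av (i + j))"
proof (induction i arbitrary: j)
  case 0 thus ?case by simp
next
  case (Suc i)
  have "ip (av (Suc i)) (av j) = ip (\<lambda>x. \<Sum>y\<in>D0. tr x y * av i y) (av j)"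
    by (rule ip_cong) (simp_all del: avoid.simps add: av_Suc)
  also have "\<dots> = ip (av i) (\<lambda>x. \<Sum>y\<in>D0. tr x y * av j y)" by (rule selfadj)
  also have "\<dots> = ip (av i) (av (Suc j))"
    by (rule ip_cong) (simp_all del: avoid.simps add: av_Suc)
  also have "\<dots> = ip (av 0) (av (i + Suc j))" by (rule Suc.IH)
  finally show ?case by simp
qed

definition a :: "nat \<Rightarrow> real" where
  "a k = (\<Sum>x\<in>V. av k x)"

lemma a_ip: "a k = ip (av 0) (av k)"
proof -
  have "a k = (\<Sum>x\<in>D0. av k x)"
    unfolding a_def by (rule sum.mono_neutral_right) (auto simp: finite_V av_B)
  also have "\<dots> = ip (av 0) (av k)" unfolding ip_def by (rule sum.cong) (auto simp: avoid.simps)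
  finally show ?thesis .
qed

lemma CS: "(ip f g) ^ 2 \<le> ip f f * ip g g"
  using Cauchy_Schwarz_ineq_sum[of f g D0] by (simp add: ip_def power2_eq_square)

lemma ip_sq_nonneg: "ip f f \<ge> 0"
  unfolding ip_def by (rule sum_nonneg) simp

lemma a_even: "a (2 * m) = ip (av m) (av m)"
  using a_ip ip_shift[of m m] by (simp add: mult_2)

lemma a1_sq: "a 1 ^ 2 \<le> a 0 * a 2"
  using CS[of "av 0" "av 1"] a_ip[of 1] a_even[of 0] a_even[of 1] by simp

lemma c_sq: "a (2 * Suc m) ^ 2 \<le> a (2 * m) * a (2 * Suc (Suc m))"
proof -
  have "a (2 * Suc m) = ip (av m) (av (Suc (Suc m)))"
    using a_ip ip_shift[of m "Suc (Suc m)"] by (simp add: mult_2)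
  thus ?thesis using CS[of "av m" "av (Suc (Suc m))"] a_even[of m] a_even[of "Suc (Suc m)"] by simp
qed

lemma a0: "a 0 = real (card V) - real (card B)"
proof -
  have "a 0 = (\<Sum>x\<in>V. if x \<in> B then 0 else 1)" unfolding a_def by (rule sum.cong) (auto simp: avoid.simps)
  also have "\<dots> = real (card D0)" by (simp add: sum.If_cases finite_V Diff_eq)
  also have "\<dots> = real (card V) - real (card B)" using BV finite_B by (simp add: card_Diff_subset of_nat_diff card_mono finite_V)
  finally show ?thesis .
qed

lemma av1: assumes "x \<in> D0" shows "av (Suc 0) x = (\<Sum>y\<in>D0. tr x y)"
proof -
  have "av (Suc 0) x = (\<Sum>y\<in>D0. tr x y * av 0 y)" by (rule av_Suc[OF assms])
  also have "\<dots> = (\<Sum>y\<in>D0. tr x y)" by (rule sum.cong) (auto simp: avoid.simps)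
  finally show ?thesis .
qed

lemma a1: "a 1 \<ge> real (card V) - 2 * real (card B)"
proof -
  have rowD: "(\<Sum>y\<in>D0. tr x y) = 1 - (\<Sum>y\<in>B. tr x y)" if x: "x \<in> D0" for x
  proof -
    have xh: "x \<in> hyp n" using x V_sub by blast
    have "(\<Sum>y\<in>V. tr x y) = (\<Sum>y\<in>D0. tr x y) + (\<Sum>y\<in>B. tr x y)"
      using BV finite_V by (metis Diff_partition sum.subset_diff)
    thus ?thesis using tr_row[OF xh vV] by simp
  qed
  have "a 1 = ip (av 0) (av 1)" by (rule a_ip)
  also have "\<dots> = (\<Sum>x\<in>D0. \<Sum>y\<in>D0. tr x y)"
    unfolding ip_def by (rule sum.cong) (auto simp: av1 avoid.simps(1) One_nat_def)
  also have "\<dots> = (\<Sum>x\<in>D0. 1 - (\<Sum>y\<in>B. tr x y))" by (rule sum.cong) (auto simp: rowD)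
  also have "\<dots> = real (card D0) - (\<Sum>y\<in>B. \<Sum>x\<in>D0. tr y x)"
  proof -
    have "(\<Sum>x\<in>D0. \<Sum>y\<in>B. tr x y) = (\<Sum>x\<in>D0. \<Sum>y\<in>B. tr y x)"
      by (intro sum.cong refl tr_sym) (use BV in auto)
    also have "\<dots> = (\<Sum>y\<in>B. \<Sum>x\<in>D0. tr y x)" by (rule sum.swap)
    finally show ?thesis by (simp add: sum_subtractf)
  qed
  also have "\<dots> \<ge> real (card D0) - (\<Sum>y\<in>B. 1)"
  proof -
    have "(\<Sum>x\<in>D0. tr y x) \<le> 1" if y: "y \<in> B" for y
    proof -
      have yh: "y \<in> hyp n" using y BV V_sub by blast
      have "(\<Sum>x\<in>D0. tr y x) \<le> (\<Sum>x\<in>V. tr y x)"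
        by (rule sum_mono2) (use finite_V tr_nonneg[OF yh] in auto)
      thus ?thesis using tr_row[OF yh vV] by simp
    qed
    hence "(\<Sum>y\<in>B. \<Sum>x\<in>D0. tr y x) \<le> (\<Sum>y\<in>B. 1)" by (rule sum_mono)
    thus ?thesis by linarith
  qed
  finally show ?thesis
    using BV finite_B by (simp add: card_Diff_subset of_nat_diff card_mono finite_V)
qed

end


context env2 begin

lemma a_even_bound: assumes a0p: "a 0 > 0" shows "a (2 * m) \<ge> (a 1 / a 0) ^ (2 * m) * a 0"
proof -
  let ?c = "\<lambda>m. a (2 * m)"
  have "?c m \<ge> ((a 1 / a 0) ^ 2) ^ m * ?c 0"
  proof (rule logconv)
    show "0 \<le> ?c m" for m using a_even ip_sq_nonneg by simp
    show "?c (Suc m) ^ 2 \<le> ?c m * ?c (Suc (Suc m))" for m using c_sq by simp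
    show "0 \<le> (a 1 / a 0) ^ 2" by simp
    have "(a 1 / a 0) ^ 2 * a 0 = a 1 ^ 2 / a 0" using a0p by (simp add: power2_eq_square)
    also have "\<dots> \<le> a 2" using a1_sq a0p by (simp add: divide_le_eq mult.commute)
    finally show "(a 1 / a 0) ^ 2 * ?c 0 \<le> ?c 1" by simp
  qed
  thus ?thesis by (simp add: power_mult)
qed

theorem det_bound:
  assumes b4: "4 * real (card B) \<le> real (card V)" and t: "t \<ge> 0"
  shows "hit_tail \<beta> u G n B t \<ge> exp (- 2 * t * real (card B) / real (card V)) - 3 * real (card B) / real (card V)"
proof -
  define Vc where "Vc = real (card V)"
  define b where "b = real (card B)"
  define x where "x = b / Vc"
  have Vcp: "Vc > 0" using vV finite_V card_gt_0_iff unfolding Vc_def by fastforce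
  have b0: "b \<ge> 0" by (simp add: b_def)
  have x0: "x \<ge> 0" using b0 Vcp by (simp add: x_def)
  have x4: "x \<le> 1/4" using b4 Vcp by (simp add: x_def b_def Vc_def divide_le_eq)
  have a0e: "a 0 = Vc - b" by (simp add: a0 Vc_def b_def)
  have a0p: "a 0 > 0" using a0e b4 Vcp by (simp add: Vc_def b_def)
  define r where "r = a 1 / a 0"
  have r1: "r \<ge> (Vc - 2 * b) / (Vc - b)"
    unfolding r_def using a1 a0p a0e by (simp add: divide_right_mono Vc_def b_def)
  have r2: "(Vc - 2 * b) / (Vc - b) \<ge> 1 / (1 + 2 * x)"
  proof -
    have pos: "Vc - b > 0" "1 + 2 * x > 0" using a0p a0e x0 by auto
    have "(Vc - 2 * b) * (1 + 2 * x) \<ge> Vc - b"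
    proof -
      have "(Vc - 2 * b) * (1 + 2 * x) = Vc - 2 * b + 2 * b - 4 * b * x"
        using Vcp unfolding x_def by (simp add: field_simps)
      also have "\<dots> = Vc - 4 * b * x" by simp
      also have "4 * b * x \<le> b" using mult_left_mono[of "4 * x" 1 b] x4 b0 by (simp add: mult_ac)
      hence "Vc - 4 * b * x \<ge> Vc - b" by simp
      finally show ?thesis by simp
    qed
    thus ?thesis using pos by (simp add: divide_simps)
  qed
  have r3: "1 / (1 + 2 * x) \<ge> exp (- 2 * x)"
  proof -
    have "1 + 2 * x \<le> exp (2 * x)" using exp_ge_add_one_self[of "2 * x"] by simp
    hence "1 / exp (2 * x) \<le> 1 / (1 + 2 * x)" using x0 by (intro divide_left_mono) auto
    thus ?thesis by (simp add: exp_minus field_simps)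
  qed
  have rge: "r \<ge> exp (- 2 * x)" using r1 r2 r3 by linarith
  define k where "k = nat \<lfloor>t\<rfloor>"
  define m where "m = (k + 1) div 2"
  have km: "k \<le> 2 * m" "2 * m \<le> k + 1" unfolding m_def by auto
  have kt: "real k \<le> t" using t unfolding k_def by linarith
  have mt: "real (2 * m) \<le> t + 1" using km kt by linarith
  have hit: "hit_tail \<beta> u G n B t = a k / Vc" by (simp add: hit_tail_def a_def k_def Vc_def)
  have "a k \<ge> a (2 * m)"
    unfolding a_def by (rule sum_mono) (use av_antimono km in auto)
  moreover have "a (2 * m) \<ge> r ^ (2 * m) * a 0" using a_even_bound[OF a0p] by (simp add: r_def)
  moreover have "r ^ (2 * m) \<ge> exp (- 2 * x) ^ (2 * m)" using rge by (intro power_mono) auto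
  moreover have "exp (- 2 * x) ^ (2 * m) = exp (- 2 * x * real (2 * m))"
    by (simp add: exp_of_nat_mult[symmetric] mult.commute)
  moreover have "exp (- 2 * x * real (2 * m)) \<ge> exp (- 2 * x * (t + 1))"
  proof -
    have h: "x * real (2 * m) \<le> x * (t + 1)" by (rule mult_left_mono[OF mt x0])
    have "- 2 * x * real (2 * m) = - 2 * (x * real (2 * m))" "- 2 * x * (t + 1) = - 2 * (x * (t + 1))" by simp_all
    thus ?thesis using h by (simp only: exp_le_cancel_iff)
  qed
  ultimately have ak: "a k \<ge> exp (- 2 * x * (t + 1)) * (Vc - b)"
    using a0p a0e by (smt (verit) mult_right_mono)
  have e1: "exp (- 2 * x * (t + 1)) = exp (- 2 * t * x) * exp (- 2 * x)"
    by (simp add: exp_add[symmetric] algebra_simps)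
  have "hit_tail \<beta> u G n B t \<ge> exp (- 2 * t * x) * exp (- 2 * x) * (1 - x)"
  proof -
    have "a k / Vc \<ge> exp (- 2 * x * (t + 1)) * (Vc - b) / Vc" using ak Vcp by (simp add: divide_right_mono)
    also have "exp (- 2 * x * (t + 1)) * (Vc - b) / Vc = exp (- 2 * t * x) * exp (- 2 * x) * (1 - x)"
    proof -
      have q1: "(Vc - b) / Vc = 1 - x" using Vcp by (simp add: x_def diff_divide_distrib)
      have "exp (- 2 * x * (t + 1)) * (Vc - b) / Vc = exp (- 2 * x * (t + 1)) * ((Vc - b) / Vc)" by simp
      also have "\<dots> = exp (- 2 * t * x) * exp (- 2 * x) * (1 - x)" by (simp only: e1 q1)
      finally show ?thesis .
    qed
    finally show ?thesis using hit by simp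
  qed
  moreover have "exp (- 2 * t * x) * exp (- 2 * x) * (1 - x) \<ge> exp (- 2 * t * x) * (1 - 3 * x)"
  proof -
    have "exp (- 2 * x) \<ge> 1 - 2 * x" using exp_ge_add_one_self[of "- 2 * x"] by simp
    hence "exp (- 2 * x) * (1 - x) \<ge> (1 - 2 * x) * (1 - x)" using x4 by (intro mult_right_mono) auto
    moreover have "(1 - 2 * x) * (1 - x) \<ge> 1 - 3 * x" using x0 by (simp add: algebra_simps)
    ultimately have "exp (- 2 * x) * (1 - x) \<ge> 1 - 3 * x" by linarith
    thus ?thesis by (simp add: mult.assoc mult_left_mono)
  qed
  moreover have "exp (- 2 * t * x) * (1 - 3 * x) \<ge> exp (- 2 * t * x) - 3 * x"
  proof -
    have "exp (- 2 * t * x) \<le> 1" using t x0 by simp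
    thus ?thesis using x0 by (simp add: algebra_simps mult_left_le)
  qed
  moreover have "exp (- 2 * t * x) = exp (- 2 * t * real (card B) / real (card V))"
    by (simp add: x_def b_def Vc_def)
  moreover have "3 * x = 3 * real (card B) / real (card V)" by (simp add: x_def b_def Vc_def)
  ultimately show ?thesis by linarith
qed

end


lemma std_normal_half:
  assumes P: "prob_space M" and D: "distributed M lborel X std_normal_density"
  shows "measure M {\<omega>\<in>space M. X \<omega> \<le> 0} \<ge> 1/2"
proof -
  interpret prob_space M by (rule P)
  have D2: "distributed M lborel (\<lambda>\<omega>. - X \<omega>) std_normal_density"
    using normal_density_affine[OF D, of "-1" 0] by simp
  have Xm[measurable]: "X \<in> borel_measurable M" using distributed_measurable[OF D] by simp
  have "emeasure M (X -` {..0} \<inter> space M) = (\<integral>\<^sup>+x. ennreal (std_normal_density x) * indicator {..0} x \<partial>lborel)"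
    by (rule distributed_emeasure[OF D]) simp
  also have "\<dots> = emeasure M ((\<lambda>\<omega>. - X \<omega>) -` {..0} \<inter> space M)"
    by (rule distributed_emeasure[OF D2, symmetric]) simp
  finally have e: "emeasure M (X -` {..0} \<inter> space M) = emeasure M ((\<lambda>\<omega>. - X \<omega>) -` {..0} \<inter> space M)" .
  have s1: "X -` {..0} \<inter> space M = {\<omega>\<in>space M. X \<omega> \<le> 0}" by auto
  have s2: "(\<lambda>\<omega>. - X \<omega>) -` {..0} \<inter> space M = {\<omega>\<in>space M. X \<omega> \<ge> 0}" by auto
  have eqm: "measure M {\<omega>\<in>space M. X \<omega> \<le> 0} = measure M {\<omega>\<in>space M. X \<omega> \<ge> 0}"
    using e unfolding s1 s2 measure_def by simp
  have "1 = measure M ({\<omega>\<in>space M. X \<omega> \<le> 0} \<union> {\<omega>\<in>space M. X \<omega> \<ge> 0})"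
  proof -
    have "{\<omega>\<in>space M. X \<omega> \<le> 0} \<union> {\<omega>\<in>space M. X \<omega> \<ge> 0} = space M" by auto
    thus ?thesis using prob_space by simp
  qed
  also have "\<dots> \<le> measure M {\<omega>\<in>space M. X \<omega> \<le> 0} + measure M {\<omega>\<in>space M. X \<omega> \<ge> 0}"
    by (rule measure_Un_le) measurable
  finally show ?thesis using eqm by simp
qed

lemma u_nonneg:
  assumes P: "prob_space M" and D: "\<And>x. distributed M lborel (g x) std_normal_density"
    and m: "\<And>n x. n \<ge> 2 \<Longrightarrow> x \<in> hyp n \<Longrightarrow> measure M {\<omega> \<in> space M. g x \<omega> \<le> - u n} = real n powr (- c)"
    and c: "c > 1" and n: "n \<ge> 2"
  shows "u n \<ge> 0"
proof (rule ccontr)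
  assume "\<not> u n \<ge> 0"
  hence un: "u n < 0" by simp
  interpret prob_space M by (rule P)
  let ?x = "replicate n True"
  have xh: "?x \<in> hyp n" by (simp add: hyp_def)
  have Xm[measurable]: "g ?x \<in> borel_measurable M" using distributed_measurable[OF D] by simp
  have "1/2 \<le> measure M {\<omega>\<in>space M. g ?x \<omega> \<le> 0}" by (rule std_normal_half[OF P D])
  also have "\<dots> \<le> measure M {\<omega>\<in>space M. g ?x \<omega> \<le> - u n}"
    by (rule finite_measure_mono) (use un in auto)
  also have "\<dots> = real n powr (- c)" using m[OF n xh] .
  also have "\<dots> \<le> 2 powr (- c)" using n c by (intro powr_mono2') auto
  also have "\<dots> < 2 powr (- 1)" using c by (intro powr_less_mono) auto
  finally show False by (simp add: powr_minus)
qed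



lemma occ_bc:
  assumes P: "prob_space M" and D: "\<And>x. distributed M lborel (g x) std_normal_density"
    and m: "\<And>n x. n \<ge> 2 \<Longrightarrow> x \<in> hyp n \<Longrightarrow> measure M {\<omega> \<in> space M. g x \<omega> \<le> - u n} = real n powr (- c)"
    and c: "c > 2"
  shows "AE \<omega> in M. \<forall>\<^sub>F n in sequentially. real (card {x\<in>hyp n. g x \<omega> \<le> - u n}) < 2 ^ n / real n"
proof -
  interpret prob_space M by (rule P)
  have meas[measurable]: "g x \<in> borel_measurable M" for x using distributed_measurable[OF D[of x]] by simp
  define E where "E n x = {\<omega>\<in>space M. g x \<omega> \<le> - u n}" for n x
  have Es[measurable]: "E n x \<in> sets M" for n x unfolding E_def by measurable
  define Y where "Y n \<omega> = (\<Sum>x\<in>hyp n. indicator (E n x) \<omega> :: real)" for n \<omega>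
  have Ym[measurable]: "Y n \<in> borel_measurable M" for n unfolding Y_def by measurable
  have Yi: "integrable M (Y n)" for n unfolding Y_def
    by (rule Bochner_Integration.integrable_sum, rule integrable_real_indicator) (auto simp: emeasure_eq_measure)
  have Yexp: "integral\<^sup>L M (Y n) = 2 ^ n * real n powr (- c)" if n: "n \<ge> 2" for n
  proof -
    have "integral\<^sup>L M (Y n) = (\<Sum>x\<in>hyp n. measure M (E n x))"
      unfolding Y_def by (subst Bochner_Integration.integral_sum) (auto simp: Int_absorb2 E_def emeasure_eq_measure)
    also have "\<dots> = (\<Sum>x\<in>hyp n. real n powr (- c))" by (rule sum.cong) (auto simp: E_def m[OF n])
    also have "\<dots> = 2 ^ n * real n powr (- c)" by (simp add: card_hyp)
    finally show ?thesis .
  qed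
  have Ycard: "Y n \<omega> = real (card {x\<in>hyp n. g x \<omega> \<le> - u n})" if "\<omega> \<in> space M" for n \<omega>
  proof -
    have "Y n \<omega> = (\<Sum>x\<in>hyp n. if g x \<omega> \<le> - u n then 1 else 0)"
      unfolding Y_def by (rule sum.cong) (use that in \<open>auto simp: E_def indicator_def\<close>)
    also have "\<dots> = real (card {x\<in>hyp n. g x \<omega> \<le> - u n})"
      by (simp add: sum.If_cases finite_hyp Int_def conj_commute)
    finally show ?thesis .
  qed
  define A where "A n = (if n \<ge> 2 then {\<omega>\<in>space M. Y n \<omega> \<ge> 2 ^ n / real n} else {})" for n
  have As[measurable]: "A n \<in> sets M" for n unfolding A_def by auto
  have Ab: "measure M (A n) \<le> real n powr (1 - c)" for n
  proof (cases "n \<ge> 2")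
    case True
    have pos: "(0::real) < 2 ^ n / real n" using True by simp
    have "measure M (A n) \<le> integral\<^sup>L M (Y n) / (2 ^ n / real n)"
      unfolding A_def using True
      by (simp only: if_True) (rule integral_Markov_inequality_measure[OF Yi _ _ pos, of "space M"],
          auto simp: Y_def intro!: AE_I2 sum_nonneg)
    also have "\<dots> = real n * real n powr (- c)" using True Yexp[OF True] by simp
    also have "\<dots> = real n powr (1 - c)" using True by (simp add: powr_diff powr_minus divide_inverse)
    finally show ?thesis .
  next
    case False thus ?thesis by (simp add: A_def)
  qed
  have sumA: "summable (\<lambda>n. measure M (A n))"
  proof (rule summable_comparison_test)
    show "\<exists>N. \<forall>n\<ge>N. norm (measure M (A n)) \<le> real n powr (1 - c)" using Ab by auto
    show "summable (\<lambda>n. real n powr (1 - c))" using c by (subst summable_real_powr_iff) auto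
  qed
  have "AE \<omega> in M. eventually (\<lambda>n. \<omega> \<in> space M - A n) sequentially"
    by (rule borel_cantelli_AE1[OF As _ sumA]) (simp add: emeasure_eq_measure)
  thus ?thesis
  proof (rule AE_mp[OF _ AE_I2], intro impI)
    fix \<omega> assume \<omega>: "\<omega> \<in> space M" and ev: "eventually (\<lambda>n. \<omega> \<in> space M - A n) sequentially"
    show "\<forall>\<^sub>F n in sequentially. real (card {x\<in>hyp n. g x \<omega> \<le> - u n}) < 2 ^ n / real n"
      using eventually_conj[OF ev eventually_ge_at_top[of 2]]
    proof (rule eventually_mono)
      fix n assume "\<omega> \<in> space M - A n \<and> 2 \<le> n"
      thus "real (card {x\<in>hyp n. g x \<omega> \<le> - u n}) < 2 ^ n / real n"
        using \<omega> Ycard by (auto simp: A_def)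
    qed
  qed
qed



lemma det_final:
  assumes n5: "n \<ge> 5" and un: "u n \<ge> 0"
    and occ: "real (card {x\<in>hyp n. occupied u G x}) < 2 ^ n / real n"
    and AV: "A \<subseteq> Vcirc u G n" and t: "t > 0"
  shows "hit_tail \<beta> u G n (A \<inter> Istar u G n) t
     \<ge> (1 + 0) * exp (- 2 * t * real (card (A \<inter> Istar u G n)) / real (card (Vcirc u G n)))
        - 6 / ln (real n)"
proof -
  define Oc where "Oc = {x\<in>hyp n. occupied u G x}"
  define B where "B = A \<inter> Istar u G n"
  define V where "V = Vcirc u G n"
  have finO: "finite Oc" unfolding Oc_def using finite_hyp by simp
  have IO: "Istar u G n \<subseteq> Oc" by (auto simp: Istar_def Oc_def)
  have SO: "Vstar u G n \<subseteq> Oc" by (auto simp: Vstar_def Oc_def)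
  have SH: "Vstar u G n \<subseteq> hyp n" by (auto simp: Vstar_def)
  have finS: "finite (Vstar u G n)" using SO finO finite_subset by blast
  have cB: "card B \<le> card Oc" unfolding B_def using IO finO by (intro card_mono) auto
  have cS: "card (Vstar u G n) \<le> card Oc" using SO finO by (rule card_mono[rotated])
  have cV: "real (card V) = 2 ^ n - real (card (Vstar u G n))"
    unfolding V_def Vcirc_def using SH finS card_mono[OF finite_hyp SH]
    by (simp add: card_Diff_subset card_hyp of_nat_diff)
  define oc where "oc = real (card Oc)"
  define b where "b = real (card B)"
  define vc where "vc = real (card V)"
  have o0: "oc \<ge> 0" by (simp add: oc_def)
  have bo: "b \<le> oc" using cB by (simp add: b_def oc_def)
  have vco: "vc \<ge> 2 ^ n - oc" using cV cS by (simp add: vc_def oc_def)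
  have np: "real n > 0" using n5 by simp
  have no: "real n * oc < 2 ^ n" using occ np by (simp add: oc_def Oc_def field_simps)
  have o5: "5 * oc \<le> real n * oc" using n5 o0 by (intro mult_right_mono) auto
  have vcp: "vc > 0" using vco no o5 o0 by linarith
  then obtain v where v: "v \<in> V" unfolding vc_def by (metis card.empty less_irrefl of_nat_0 ex_in_conv)
  have BV: "B \<subseteq> V" unfolding B_def V_def using AV by auto
  interpret env2 \<beta> u G n B v
    by unfold_locales (use n5 un BV v in \<open>auto simp: V_def\<close>)
  have b4: "4 * real (card B) \<le> real (card (Vcirc u G n))"
    using bo vco no o5 by (simp add: b_def vc_def V_def)
  have db: "hit_tail \<beta> u G n B t \<ge> exp (- 2 * t * real (card B) / real (card (Vcirc u G n)))
             - 3 * real (card B) / real (card (Vcirc u G n))"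
    using det_bound[OF b4] t by simp
  have lnp: "ln (real n) > 0" using n5 by simp
  have lnl: "ln (real n) \<le> real n - 1" using ln_le_minus_one[OF np] .
  have "3 * b * ln (real n) \<le> 3 * oc * (real n - 1)"
    using bo lnl lnp o0 by (intro mult_mono) (auto simp: b_def)
  also have "\<dots> = 3 * (real n * oc) - 3 * oc" by (simp add: algebra_simps)
  also have "\<dots> \<le> 6 * vc" using no vco vcp by linarith
  finally have key: "3 * b * ln (real n) \<le> 6 * vc" .
  have "3 * b / vc \<le> 6 / ln (real n)"
    using key vcp lnp by (simp add: divide_simps mult.commute)
  thus ?thesis using db unfolding B_def[symmetric] by (simp add: b_def vc_def V_def)
qed

theorem proposition6p4:
  fixes M :: "'w measure" and g :: "bool list \<Rightarrow> 'w \<Rightarrow> real"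
    and u :: "nat \<Rightarrow> real" and \<beta> c :: real
  assumes "prob_space M"
    and "\<And>x. distributed M lborel (g x) std_normal_density"
    and "prob_space.indep_vars M (\<lambda>_. borel) g UNIV"
    and "c > 0" and "\<beta> > 0"
    and "\<And>n x. n \<ge> 2 \<Longrightarrow> x \<in> hyp n \<Longrightarrow>
           measure M {\<omega> \<in> space M. g x \<omega> \<le> - u n} = real n powr (- c)"
    and "c > 1 + ln 4"
  shows "\<exists>\<epsilon> :: nat \<Rightarrow> real. \<exists>C :: real. (\<epsilon> \<longlonglongrightarrow> 0) \<and>
    (\<exists>\<Omega>' \<in> sets M. measure M \<Omega>' = 1 \<and>
      (\<forall>\<omega> \<in> \<Omega>'. \<forall>\<^sub>F n in sequentially.
         \<forall>A \<subseteq> Vcirc u (\<lambda>x. g x \<omega>) n. \<forall>t > 0.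
           hit_tail \<beta> u (\<lambda>x. g x \<omega>) n (A \<inter> Istar u (\<lambda>x. g x \<omega>) n) t
             \<ge> (1 + \<epsilon> n) * exp (- 2 * t * real (card (A \<inter> Istar u (\<lambda>x. g x \<omega>) n))
                                     / real (card (Vcirc u (\<lambda>x. g x \<omega>) n)))
               - C / ln (real n)))"
proof -
  note P = assms(1) and D = assms(2) and m = assms(6)
  interpret prob_space M by (rule P)
  have "exp 1 < (4::real)" using exp_le by linarith
  hence "ln 4 > (1::real)" by (metis exp_gt_zero ln_exp ln_less_cancel_iff zero_less_numeral)
  hence c2: "c > 2" using assms(7) by linarith
  have AEo: "AE \<omega> in M. \<forall>\<^sub>F n in sequentially. real (card {x\<in>hyp n. g x \<omega> \<le> - u n}) < 2 ^ n / real n"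
    by (rule occ_bc[OF P D m c2])
  then obtain N where N: "{\<omega> \<in> space M. \<not> (\<forall>\<^sub>F n in sequentially. real (card {x\<in>hyp n. g x \<omega> \<le> - u n}) < 2 ^ n / real n)} \<subseteq> N"
    "emeasure M N = 0" "N \<in> sets M" by (rule AE_E)
  define \<Omega>' where "\<Omega>' = space M - N"
  have \<Omega>s: "\<Omega>' \<in> sets M" unfolding \<Omega>'_def using N(3) by auto
  have \<Omega>m: "measure M \<Omega>' = 1" unfolding \<Omega>'_def using prob_compl[OF N(3)] N(2) by (simp add: measure_def)
  have main: "\<forall>\<^sub>F n in sequentially.
         \<forall>A \<subseteq> Vcirc u (\<lambda>x. g x \<omega>) n. \<forall>t > 0.
           hit_tail \<beta> u (\<lambda>x. g x \<omega>) n (A \<inter> Istar u (\<lambda>x. g x \<omega>) n) t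
             \<ge> (1 + 0) * exp (- 2 * t * real (card (A \<inter> Istar u (\<lambda>x. g x \<omega>) n))
                                     / real (card (Vcirc u (\<lambda>x. g x \<omega>) n)))
               - 6 / ln (real n)" if \<omega>: "\<omega> \<in> \<Omega>'" for \<omega>
  proof -
    have ev: "\<forall>\<^sub>F n in sequentially. real (card {x\<in>hyp n. g x \<omega> \<le> - u n}) < 2 ^ n / real n"
      using \<omega> N(1) unfolding \<Omega>'_def by blast
    show ?thesis using eventually_conj[OF ev eventually_ge_at_top[of 5]]
    proof (rule eventually_mono)
      fix n :: nat assume h: "real (card {x\<in>hyp n. g x \<omega> \<le> - u n}) < 2 ^ n / real n \<and> 5 \<le> n"
      have un: "u n \<ge> 0" using u_nonneg[OF P D m, where n=n] h c2 by simp
      have se: "{x\<in>hyp n. occupied u (\<lambda>x. g x \<omega>) x} = {x\<in>hyp n. g x \<omega> \<le> - u n}"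
        by (auto simp: occupied_def hyp_def)
      show "\<forall>A \<subseteq> Vcirc u (\<lambda>x. g x \<omega>) n. \<forall>t > 0.
           hit_tail \<beta> u (\<lambda>x. g x \<omega>) n (A \<inter> Istar u (\<lambda>x. g x \<omega>) n) t
             \<ge> (1 + 0) * exp (- 2 * t * real (card (A \<inter> Istar u (\<lambda>x. g x \<omega>) n))
                                     / real (card (Vcirc u (\<lambda>x. g x \<omega>) n)))
               - 6 / ln (real n)"
        using det_final[where n=n and u=u and G="\<lambda>x. g x \<omega>"] h un se by auto
    qed
  qed
  show ?thesis
    by (rule exI[of _ "\<lambda>_. 0"], rule exI[of _ 6]) (use \<Omega>s \<Omega>m main in auto)
qed


end
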